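(* Let $k\ge1$. For a coloring matrix $A$, let $\widehat{A}$ (the blowup of $A$) be the block matrix obtained by replacing every entry $1$ of $A$ by the $k\times k$ all-ones matrix and every entry $0$ by the $k\times k$ all-zeros matrix. If $A$ and $B$ are tree coloring equivalent, then so are $\widehat{A}$ and $\widehat{B}$; and if $A$ and $B$ are strictly tree coloring equivalent, then so are $\widehat{A}$ and $\widehat{B}$. Moreover, $t_{\widehat{A}}(n)=k^n t_A(n)$ for all $n\ge1$.
   Context: A plane tree is an unlabeled rooted tree in which the children of every vertex are linearly ordered. A coloring matrix is an $m\times m$ matrix $A=(a_{ij})$ with entries in $\{0,1\}$. An $A$-coloring of a plane tree assigns to each vertex a color in $\{1,\dots,m\}$ such that whenever a vertex of color $j$ is a child of a vertex of color $i$, $a_{ij}=1$. Let $t_A(n)$ be the number of pairs (plane tree with $n$ vertices, $A$-coloring of it) and $t_A^{(i)}(n)$ the number of those with root color $i$. Two coloring matrices $A,B$ of the same size are tree coloring equivalent if $t_A(n)=t_B(n)$ for all $n\ge1$, and strictly tree coloring equivalent if $t_A^{(i)}(n)=t_B^{(i)}(n)$ for all $n\ge1$ and all $i$. *)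

theory Defs
  imports Main
begin

(* Plane trees: unlabeled rooted trees, children linearly ordered (as a list). *)
datatype ptree = Node "ptree list"

(* Color-labelled plane trees; a coloring of a plane tree T is a labelled tree of shape T. *)
datatype ctree = CNode nat "ctree list"

fun nv :: "ptree \<Rightarrow> nat" where
  "nv (Node ts) = 1 + sum_list (map nv ts)"

fun shape :: "ctree \<Rightarrow> ptree" where
  "shape (CNode c ts) = Node (map shape ts)"

fun root_color :: "ctree \<Rightarrow> nat" where
  "root_color (CNode c ts) = c"

(* A coloring matrix of size m is A :: nat => nat => bool, A i j meaning a_ij = 1,
   colors are 0..m-1 (shifted from 1..m). *)
fun valid_col :: "nat \<Rightarrow> (nat \<Rightarrow> nat \<Rightarrow> bool) \<Rightarrow> ctree \<Rightarrow> bool" where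
  "valid_col m A (CNode c ts) =
     (c < m \<and> list_all (\<lambda>t. A c (root_color t) \<and> valid_col m A t) ts)"

definition tcount :: "nat \<Rightarrow> (nat \<Rightarrow> nat \<Rightarrow> bool) \<Rightarrow> nat \<Rightarrow> nat" where
  "tcount m A n = card {(T, C). nv T = n \<and> shape C = T \<and> valid_col m A C}"

definition tcount_root :: "nat \<Rightarrow> (nat \<Rightarrow> nat \<Rightarrow> bool) \<Rightarrow> nat \<Rightarrow> nat \<Rightarrow> nat" where
  "tcount_root m A i n =
     card {(T, C). nv T = n \<and> shape C = T \<and> valid_col m A C \<and> root_color C = i}"

definition tree_col_equiv :: "nat \<Rightarrow> (nat \<Rightarrow> nat \<Rightarrow> bool) \<Rightarrow> (nat \<Rightarrow> nat \<Rightarrow> bool) \<Rightarrow> bool" where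
  "tree_col_equiv m A B \<longleftrightarrow> (\<forall>n\<ge>1. tcount m A n = tcount m B n)"

definition strict_tree_col_equiv :: "nat \<Rightarrow> (nat \<Rightarrow> nat \<Rightarrow> bool) \<Rightarrow> (nat \<Rightarrow> nat \<Rightarrow> bool) \<Rightarrow> bool" where
  "strict_tree_col_equiv m A B \<longleftrightarrow>
     (\<forall>n\<ge>1. \<forall>i<m. tcount_root m A i n = tcount_root m B i n)"

(* blowup: index p of the (m*k)x(m*k) matrix lies in block p div k *)
definition blowup :: "nat \<Rightarrow> (nat \<Rightarrow> nat \<Rightarrow> bool) \<Rightarrow> (nat \<Rightarrow> nat \<Rightarrow> bool)" where
  "blowup k A = (\<lambda>p q. A (p div k) (q div k))"

end

theory Submission
  imports Defs
begin

fun cmap :: "(nat \<Rightarrow> nat) \<Rightarrow> ctree \<Rightarrow> ctree" where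
  "cmap f (CNode c ts) = CNode (f c) (map (cmap f) ts)"

lemma shape_cmap[simp]: "shape (cmap f C) = shape C"
  by (induction C) (auto cong: map_cong)

lemma root_cmap[simp]: "root_color (cmap f C) = f (root_color C)"
  by (cases C) auto

lemma valid_blowup:
  assumes "k \<ge> 1"
  shows "valid_col (m*k) (blowup k A) C \<longleftrightarrow> valid_col m A (cmap (\<lambda>c. c div k) C)"
proof (induction C)
  case (CNode c ts)
  have "c < m*k \<longleftrightarrow> c div k < m" using assms
    by (metis div_less_iff_less_mult le_numeral_extra(2) less_le_trans mult.commute not_less zero_less_one)
  then show ?case using CNode by (auto simp: list_all_iff blowup_def)
qed

definition lift :: "nat \<Rightarrow> ctree \<Rightarrow> ctree set" where
  "lift k C = {C'. cmap (\<lambda>c. c div k) C' = C}"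

lemma card_lists:
  assumes "\<forall>y\<in>set ys. finite (F y)"
  shows "finite {xs. list_all2 (\<lambda>x y. x \<in> F y) xs ys} \<and>
         card {xs. list_all2 (\<lambda>x y. x \<in> F y) xs ys} = prod_list (map (\<lambda>y. card (F y)) ys)"
  using assms
proof (induction ys)
  case Nil
  have "{xs. list_all2 (\<lambda>x y. x \<in> F y) xs []} = {[]}" by auto
  then show ?case by simp
next
  case (Cons y ys)
  let ?R = "{xs. list_all2 (\<lambda>x y. x \<in> F y) xs ys}"
  have eq: "{xs. list_all2 (\<lambda>x y. x \<in> F y) xs (y#ys)} = (\<lambda>(x,xs). x#xs) ` (F y \<times> ?R)"
    by (auto simp: list_all2_Cons2)
  have inj: "inj_on (\<lambda>(x,xs). x#xs) (F y \<times> ?R)" by (auto simp: inj_on_def)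
  show ?case using Cons eq inj by (simp add: card_image card_cartesian_product)
qed

lemma prod_list_pow: "prod_list (map (\<lambda>t. (k::nat) ^ g t) ts) = k ^ sum_list (map g ts)"
  by (induction ts) (auto simp: power_add)

lemma div_block: "(k::nat) \<ge> 1 \<Longrightarrow> {i. i div k = c} = {c*k..<c*k+k}"
proof (rule set_eqI, rule iffI)
  fix i assume k: "k \<ge> 1" and "i \<in> {i. i div k = c}"
  then have c: "i div k = c" by simp
  have e: "i = c * k + i mod k" using c div_mult_mod_eq[of i k] by simp
  have "i mod k < k" using k by simp
  then have "c*k \<le> i" "i < c*k+k" using e by linarith+
  then show "i \<in> {c*k..<c*k+k}" by simp
next
  fix i assume "i \<in> {c*k..<c*k+k}"
  then have "k * c \<le> i" "i < k * Suc c" by (auto simp: mult.commute)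
  then show "i \<in> {i. i div k = c}" by (simp add: div_nat_eqI)
qed

lemma lift_root_aux:
  assumes "X = (\<lambda>(i,ts'). CNode i ts') ` ({i. i div k = c} \<times> L)" "i div k = c"
  shows "X \<inter> {C'. root_color C' = i} = (\<lambda>(i,ts'). CNode i ts') ` ({i} \<times> L)"
proof
  show "X \<inter> {C'. root_color C' = i} \<subseteq> (\<lambda>(i,ts'). CNode i ts') ` ({i} \<times> L)"
  proof
    fix x assume x: "x \<in> X \<inter> {C'. root_color C' = i}"
    then have "x \<in> (\<lambda>(i,ts'). CNode i ts') ` ({i. i div k = c} \<times> L)" using assms(1) by blast
    then obtain p where "p \<in> {i. i div k = c} \<times> L" "x = (\<lambda>(i,ts'). CNode i ts') p" by (rule imageE)
    then obtain j ts' where j: "x = CNode j ts'" "ts' \<in> L" by (cases p) auto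
    then have "j = i" using x by simp
    then show "x \<in> (\<lambda>(i,ts'). CNode i ts') ` ({i} \<times> L)" using j by blast
  qed
  show "(\<lambda>(i,ts'). CNode i ts') ` ({i} \<times> L) \<subseteq> X \<inter> {C'. root_color C' = i}"
  proof
    fix x assume "x \<in> (\<lambda>(i,ts'). CNode i ts') ` ({i} \<times> L)"
    then obtain p where "p \<in> {i} \<times> L" "x = (\<lambda>(i,ts'). CNode i ts') p" by (rule imageE)
    then obtain ts' where "x = CNode i ts'" "ts' \<in> L" by (cases p) auto
    then show "x \<in> X \<inter> {C'. root_color C' = i}" using assms by force
  qed
qed

lemma lift_card:
  assumes "k \<ge> 1"
  shows "finite (lift k C) \<and> card (lift k C) = k ^ nv (shape C) \<and>
    (\<forall>i. finite (lift k C \<inter> {C'. root_color C' = i}) \<and>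
         card (lift k C \<inter> {C'. root_color C' = i}) =
          (if i div k = root_color C then k ^ (nv (shape C) - 1) else 0))"
proof (induction C)
  case (CNode c ts)
  let ?L = "{ts'. list_all2 (\<lambda>x y. x \<in> lift k y) ts' ts}"
  have fin: "\<forall>y\<in>set ts. finite (lift k y)" using CNode by blast
  from card_lists[OF fin] have L: "finite ?L" "card ?L = prod_list (map (\<lambda>y. card (lift k y)) ts)"
    by auto
  have "prod_list (map (\<lambda>y. card (lift k y)) ts) = prod_list (map (\<lambda>y. k ^ nv (shape y)) ts)"
    using CNode by (metis (no_types, lifting) map_eq_conv)
  also have "\<dots> = k ^ sum_list (map (\<lambda>y. nv (shape y)) ts)" by (rule prod_list_pow)
  finally have cL: "card ?L = k ^ sum_list (map (\<lambda>y. nv (shape y)) ts)" using L by simp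
  have nvs: "nv (shape (CNode c ts)) = 1 + sum_list (map (\<lambda>y. nv (shape y)) ts)"
    by (simp add: comp_def)
  have liftCN: "lift k (CNode c ts) = (\<lambda>(i,ts'). CNode i ts') ` ({i. i div k = c} \<times> ?L)"
  proof
    show "lift k (CNode c ts) \<subseteq> (\<lambda>(i,ts'). CNode i ts') ` ({i. i div k = c} \<times> ?L)"
    proof
      fix C' assume "C' \<in> lift k (CNode c ts)"
      then obtain i ts' where C': "C' = CNode i ts'" "i div k = c" "map (cmap (\<lambda>c. c div k)) ts' = ts"
        by (cases C') (auto simp: lift_def)
      then have "ts' \<in> ?L" by (auto simp: lift_def list_all2_conv_all_nth)
      then show "C' \<in> (\<lambda>(i,ts'). CNode i ts') ` ({i. i div k = c} \<times> ?L)" using C' by auto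
    qed
  next
    show "(\<lambda>(i,ts'). CNode i ts') ` ({i. i div k = c} \<times> ?L) \<subseteq> lift k (CNode c ts)"
      by (auto simp: lift_def list_all2_conv_all_nth intro!: nth_equalityI)
  qed
  have inj: "inj_on (\<lambda>(i,ts'). CNode i ts') X" for X by (auto simp: inj_on_def)
  have cb: "card {i. i div k = c} = k" "finite {i. i div k = c}" using div_block[OF assms] by auto
  have part1: "finite (lift k (CNode c ts)) \<and> card (lift k (CNode c ts)) = k ^ nv (shape (CNode c ts))"
    using liftCN cb L cL nvs by (simp add: card_image[OF inj] card_cartesian_product)
  have part2: "finite (lift k (CNode c ts) \<inter> {C'. root_color C' = i}) \<and>
         card (lift k (CNode c ts) \<inter> {C'. root_color C' = i}) =
          (if i div k = root_color (CNode c ts) then k ^ (nv (shape (CNode c ts)) - 1) else 0)" for i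
  proof (cases "i div k = c")
    case True
    have "lift k (CNode c ts) \<inter> {C'. root_color C' = i} = (\<lambda>(i,ts'). CNode i ts') ` ({i} \<times> ?L)"
      using lift_root_aux[OF liftCN True] .
    then show ?thesis using True L cL nvs by (simp add: card_image[OF inj] card_cartesian_product)
  next
    case False
    have "lift k (CNode c ts) \<inter> {C'. root_color C' = i} = {}"
      using liftCN False by auto
    then show ?thesis using False by simp
  qed
  show ?case using part1 part2 by blast
qed

lemma union_card:
  fixes g :: "ctree \<Rightarrow> ctree set"
  assumes "\<forall>C\<in>S. g C \<subseteq> lift k C \<and> finite (g C) \<and> card (g C) = N" "N > 0"
  shows "card (\<Union>C\<in>S. g C) = N * card S"
proof (cases "finite S")
  case True
  have disj: "\<forall>C\<in>S. \<forall>D\<in>S. C \<noteq> D \<longrightarrow> g C \<inter> g D = {}"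
    using assms(1) by (auto simp: lift_def)
  have "card (\<Union>C\<in>S. g C) = (\<Sum>C\<in>S. card (g C))"
    using card_UN_disjoint[OF True] assms(1) disj by blast
  also have "\<dots> = (\<Sum>C\<in>S. N)" using assms(1) by simp
  finally show ?thesis by simp
next
  case False
  have "S \<subseteq> cmap (\<lambda>c. c div k) ` (\<Union>C\<in>S. g C)"
  proof
    fix C assume C: "C \<in> S"
    then have "g C \<noteq> {}" using assms by auto
    then obtain x where "x \<in> g C" by blast
    then show "C \<in> cmap (\<lambda>c. c div k) ` (\<Union>C\<in>S. g C)" using C assms(1)
      by (auto simp: lift_def)
  qed
  then have "infinite (\<Union>C\<in>S. g C)"
  proof (intro notI)
    assume "finite (\<Union>C\<in>S. g C)" "S \<subseteq> cmap (\<lambda>c. c div k) ` (\<Union>C\<in>S. g C)"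
    then have "finite S" by (rule finite_surj)
    then show False using False by simp
  qed
  then show ?thesis using False by simp
qed

lemma tcount_alt: "tcount m A n = card {C. nv (shape C) = n \<and> valid_col m A C}"
proof -
  have "{(T, C). nv T = n \<and> shape C = T \<and> valid_col m A C} =
        (\<lambda>C. (shape C, C)) ` {C. nv (shape C) = n \<and> valid_col m A C}" by auto
  moreover have "inj_on (\<lambda>C. (shape C, C)) X" for X by (auto simp: inj_on_def)
  ultimately show ?thesis unfolding tcount_def by (simp add: card_image)
qed

lemma tcount_root_alt: "tcount_root m A i n =
   card {C. nv (shape C) = n \<and> valid_col m A C \<and> root_color C = i}"
proof -
  have "{(T, C). nv T = n \<and> shape C = T \<and> valid_col m A C \<and> root_color C = i} =
        (\<lambda>C. (shape C, C)) ` {C. nv (shape C) = n \<and> valid_col m A C \<and> root_color C = i}" by auto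
  moreover have "inj_on (\<lambda>C. (shape C, C)) X" for X by (auto simp: inj_on_def)
  ultimately show ?thesis unfolding tcount_root_def by (simp add: card_image)
qed

lemma tcount_blowup:
  assumes "k \<ge> 1"
  shows "tcount (m * k) (blowup k A) n = k ^ n * tcount m A n"
proof -
  let ?S = "{C. nv (shape C) = n \<and> valid_col m A C}"
  have "{C. nv (shape C) = n \<and> valid_col (m*k) (blowup k A) C} = (\<Union>C\<in>?S. lift k C)"
    using valid_blowup[OF assms] by (auto simp: lift_def)
  moreover have "card (\<Union>C\<in>?S. lift k C) = k ^ n * card ?S"
    by (rule union_card) (use lift_card[OF assms] assms in auto)
  ultimately show ?thesis by (simp add: tcount_alt)
qed

lemma tcount_root_blowup:
  assumes "k \<ge> 1"
  shows "tcount_root (m * k) (blowup k A) i n = k ^ (n - 1) * tcount_root m A (i div k) n"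
proof -
  let ?S = "{C. nv (shape C) = n \<and> valid_col m A C \<and> root_color C = i div k}"
  have "{C. nv (shape C) = n \<and> valid_col (m*k) (blowup k A) C \<and> root_color C = i} =
        (\<Union>C\<in>?S. lift k C \<inter> {C'. root_color C' = i})"
    using valid_blowup[OF assms] by (auto simp: lift_def)
  moreover have "card (\<Union>C\<in>?S. lift k C \<inter> {C'. root_color C' = i}) = k ^ (n - 1) * card ?S"
    by (rule union_card) (use lift_card[OF assms] assms in auto)
  ultimately show ?thesis by (simp add: tcount_root_alt)
qed

theorem theorem22:
  fixes k m :: nat and A B :: "nat \<Rightarrow> nat \<Rightarrow> bool"
  assumes "k \<ge> 1"
  shows "(tree_col_equiv m A B \<longrightarrow> tree_col_equiv (m * k) (blowup k A) (blowup k B))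
       \<and> (strict_tree_col_equiv m A B \<longrightarrow>
            strict_tree_col_equiv (m * k) (blowup k A) (blowup k B))
       \<and> (\<forall>n\<ge>1. tcount (m * k) (blowup k A) n = k ^ n * tcount m A n)"
proof (intro conjI impI allI)
  show "tcount (m * k) (blowup k A) n = k ^ n * tcount m A n" for n
    by (rule tcount_blowup[OF assms])
next
  assume "tree_col_equiv m A B"
  then show "tree_col_equiv (m * k) (blowup k A) (blowup k B)"
    by (simp add: tree_col_equiv_def tcount_blowup[OF assms])
next
  assume h: "strict_tree_col_equiv m A B"
  have "i < m * k \<Longrightarrow> i div k < m" for i
    by (simp add: less_mult_imp_div_less)
  then show "strict_tree_col_equiv (m * k) (blowup k A) (blowup k B)"
    using h by (simp add: strict_tree_col_equiv_def tcount_root_blowup[OF assms])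
qed

end
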